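(* Let $C\subset V$ be an open cone containing no lines, with basepoint $b\in C$. The set of horofunctions of the reverse Funk geometry on $C$ is $\{r_{C,x}: x\in\partial C\setminus\{0\}\}$, and every one of these horofunctions is a Busemann point of the reverse Funk geometry. Moreover, if $D$ is a cross section of $C$, a sequence in $D$ converges in the reverse Funk sense to $r_{C,x}$ (with $x\in\partial C\setminus\{0\}$) if and only if it converges in the usual topology of $V$ to a positive multiple of $x$.
   Context: $V$ is a finite-dimensional real vector space. An open cone is a nonempty open convex set $T\subset V$ with $\lambda T\subseteq T$ for all $\lambda>0$ and $0\notin T$; $\partial T$ is its boundary in $V$. Write $x\le_T y$ iff $y-x\in\overline T$. For $y\in V$, $x\in T$: $M_T(y/x):=\inf\{\lambda>0:y\le_T\lambda x\}$, Funk function $F_T(y,x):=\log M_T(y/x)$, reverse Funk function $RF_T(x,y):=F_T(y,x)$. For $p\in\partial C\setminus\{0\}$, $r_{C,p}(x):=RF_C(x,p)-RF_C(b,p)$ for $x\in C$. A sequence $(x_n)$ in $C$ converges in the reverse Funk sense to $g:C\to\mathbb R$ if $RF_C(\cdot,x_n)-RF_C(b,x_n)\to g$ pointwise on $C$. A horofunction of the reverse Funk geometry is such a limit not of the form $RF_C(\cdot,p)-RF_C(b,p)$, $p\in C$. An almost-geodesic for $RF_C$ is a sequence $(x_l)$ in $C$ with, for some $\epsilon>0$, $\sum_{i=1}^l RF_C(x_{i-1},x_i)\le RF_C(x_0,x_l)+\epsilon$ for all $l\ge1$; a Busemann point is a reverse-Funk-sense limit of an almost-geodesic not of the form $RF_C(\cdot,p)-RF_C(b,p)$,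 $p\in C$. A cross section of $C$ is a set $D=\{x\in C:\psi(x)=1\}$ where $\psi$ is a linear functional on $V$ that is strictly positive on $\overline C\setminus\{0\}$. *)

theory Defs
  imports "HOL-Analysis.Analysis"
begin

text \<open>V is modelled by an arbitrary finite-dimensional real space 'a :: euclidean_space.\<close>

definition open_cone :: "'a::euclidean_space set \<Rightarrow> bool" where
  "open_cone T \<longleftrightarrow> T \<noteq> {} \<and> open T \<and> convex T \<and>
     (\<forall>c::real. c > 0 \<longrightarrow> (\<lambda>x. c *\<^sub>R x) ` T \<subseteq> T) \<and> 0 \<notin> T"

definition contains_no_lines :: "'a::euclidean_space set \<Rightarrow> bool" where
  "contains_no_lines T \<longleftrightarrow> \<not> (\<exists>x d. d \<noteq> 0 \<and> (\<forall>t::real. x + t *\<^sub>R d \<in> T))"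

definition cone_le :: "'a::euclidean_space set \<Rightarrow> 'a \<Rightarrow> 'a \<Rightarrow> bool" where
  "cone_le T x y \<longleftrightarrow> y - x \<in> closure T"

definition Mfun :: "'a::euclidean_space set \<Rightarrow> 'a \<Rightarrow> 'a \<Rightarrow> real" where
  "Mfun T y x = Inf {c::real. c > 0 \<and> cone_le T y (c *\<^sub>R x)}"

definition Funk :: "'a::euclidean_space set \<Rightarrow> 'a \<Rightarrow> 'a \<Rightarrow> real" where
  "Funk T y x = ln (Mfun T y x)"

definition RFunk :: "'a::euclidean_space set \<Rightarrow> 'a \<Rightarrow> 'a \<Rightarrow> real" where
  "RFunk T x y = Funk T y x"

definition rfun :: "'a::euclidean_space set \<Rightarrow> 'a \<Rightarrow> 'a \<Rightarrow> 'a \<Rightarrow> real" where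
  "rfun C b p x = RFunk C x p - RFunk C b p"

definition RF_converges :: "'a::euclidean_space set \<Rightarrow> 'a \<Rightarrow> (nat \<Rightarrow> 'a) \<Rightarrow> ('a \<Rightarrow> real) \<Rightarrow> bool" where
  "RF_converges C b xs g \<longleftrightarrow>
     (\<forall>y\<in>C. (\<lambda>n. RFunk C y (xs n) - RFunk C b (xs n)) \<longlonglongrightarrow> g y)"

definition not_internal :: "'a::euclidean_space set \<Rightarrow> 'a \<Rightarrow> ('a \<Rightarrow> real) \<Rightarrow> bool" where
  "not_internal C b g \<longleftrightarrow> \<not> (\<exists>p\<in>C. \<forall>y\<in>C. g y = RFunk C y p - RFunk C b p)"

definition RF_horofunction :: "'a::euclidean_space set \<Rightarrow> 'a \<Rightarrow> ('a \<Rightarrow> real) \<Rightarrow> bool" where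
  "RF_horofunction C b g \<longleftrightarrow>
     (\<exists>xs. (\<forall>n. xs n \<in> C) \<and> RF_converges C b xs g) \<and> not_internal C b g"

definition RF_almost_geodesic :: "'a::euclidean_space set \<Rightarrow> (nat \<Rightarrow> 'a) \<Rightarrow> bool" where
  "RF_almost_geodesic C xs \<longleftrightarrow> (\<forall>n. xs n \<in> C) \<and>
     (\<exists>\<epsilon>>0. \<forall>l\<ge>1. (\<Sum>i=1..l. RFunk C (xs (i-1)) (xs i)) \<le> RFunk C (xs 0) (xs l) + \<epsilon>)"

definition RF_Busemann :: "'a::euclidean_space set \<Rightarrow> 'a \<Rightarrow> ('a \<Rightarrow> real) \<Rightarrow> bool" where
  "RF_Busemann C b g \<longleftrightarrow>
     (\<exists>xs. RF_almost_geodesic C xs \<and> RF_converges C b xs g) \<and> not_internal C b g"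

definition cross_section :: "'a::euclidean_space set \<Rightarrow> 'a set \<Rightarrow> bool" where
  "cross_section C D \<longleftrightarrow> (\<exists>\<psi>::'a \<Rightarrow> real. linear \<psi> \<and>
     (\<forall>x\<in>closure C - {0}. \<psi> x > 0) \<and> D = {x\<in>C. \<psi> x = 1})"

end

theory Submission
  imports Defs "HOL-Library.Infinite_Set"
begin

locale rc = fixes C :: "'a::euclidean_space set"
  assumes oc: "open_cone C" and nl: "contains_no_lines C"
begin

lemma C_open: "open C" and C_convex: "convex C" and zero_notin: "0 \<notin> C" and C_ne: "C \<noteq> {}"
  using oc unfolding open_cone_def by auto

lemma C_scale: "x \<in> C \<Longrightarrow> c > 0 \<Longrightarrow> c *\<^sub>R x \<in> C"
  using oc unfolding open_cone_def by blast

lemma C_add: assumes "x \<in> C" "y \<in> C" shows "x + y \<in> C"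
proof -
  have "(1/2) *\<^sub>R x + (1/2) *\<^sub>R y \<in> C" using C_convex convexD[of C x y "1/2" "1/2"] assms by auto
  then have "2 *\<^sub>R ((1/2) *\<^sub>R x + (1/2) *\<^sub>R y) \<in> C" by (rule C_scale) simp
  then show ?thesis by (simp add: scaleR_add_right)
qed

lemma CK_add: assumes x: "x \<in> C" and k: "k \<in> closure C" shows "x + k \<in> C"
proof (cases "k = x")
  case True then show ?thesis using C_add x by simp
next
  case False
  have "open_segment x k \<subseteq> interior C"
    using in_interior_closure_convex_segment[OF C_convex _ k] x C_open interior_open by auto
  then have "midpoint x k \<in> C" using False interior_open[OF C_open] midpoint_in_open_segment[of x k] by blast
  then have "2 *\<^sub>R midpoint x k \<in> C" by (rule C_scale) simp
  then show ?thesis by (simp add: midpoint_def)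
qed

lemma tzero: "(\<lambda>n. inverse (real (Suc n)) *\<^sub>R (x::'a)) \<longlonglongrightarrow> 0"
  using tendsto_scaleR[OF LIMSEQ_inverse_real_of_nat tendsto_const, of x] by simp

lemma K_add: assumes "k1 \<in> closure C" "k2 \<in> closure C" shows "k1 + k2 \<in> closure C"
proof -
  obtain x0 where x0: "x0 \<in> C" using C_ne by auto
  define f where "f n = (inverse (real (Suc n)) *\<^sub>R x0 + k1) + k2" for n
  have "f n \<in> C" for n unfolding f_def
    by (intro CK_add C_scale x0 assms) auto
  moreover have "f \<longlonglongrightarrow> 0 + k1 + k2" unfolding f_def
    by (intro tendsto_add tzero tendsto_const)
  ultimately show ?thesis unfolding closure_sequential by auto
qed

lemma zero_K: "0 \<in> closure C"
proof -
  obtain x0 where x0: "x0 \<in> C" using C_ne by auto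
  have "inverse (real (Suc n)) *\<^sub>R x0 \<in> C" for n by (intro C_scale x0) auto
  then show ?thesis unfolding closure_sequential using tzero[of x0]
    by (intro exI[where x="\<lambda>n. inverse (real (Suc n)) *\<^sub>R x0"]) auto
qed

lemma K_scale: assumes "k \<in> closure C" "c \<ge> 0" shows "c *\<^sub>R k \<in> closure C"
proof (cases "c = 0")
  case True then show ?thesis using zero_K by simp
next
  case False
  then have "c > 0" using assms by auto
  obtain x0 where x0: "x0 \<in> C" using C_ne by auto
  define f where "f n = c *\<^sub>R (inverse (real (Suc n)) *\<^sub>R x0 + k)" for n
  have "f n \<in> C" for n unfolding f_def
    by (intro CK_add C_scale x0 assms \<open>c>0\<close>) auto
  moreover have "f \<longlonglongrightarrow> c *\<^sub>R (0 + k)" unfolding f_def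
    by (intro tendsto_add tzero tendsto_const tendsto_scaleR)
  ultimately show ?thesis unfolding closure_sequential by auto
qed

lemma K_diff: "c *\<^sub>R x - p \<in> closure C \<Longrightarrow> d \<ge> c \<Longrightarrow> x \<in> closure C \<Longrightarrow> d *\<^sub>R x - p \<in> closure C"
  using K_add[of "c *\<^sub>R x - p" "(d - c) *\<^sub>R x"] K_scale[of x "d - c"]
  by (simp add: algebra_simps)

lemma pointed: assumes "k \<in> closure C" "- k \<in> closure C" shows "k = 0"
proof (rule ccontr)
  assume nz: "k \<noteq> 0"
  obtain x0 where x0: "x0 \<in> C" using C_ne by auto
  have "x0 + t *\<^sub>R k \<in> C" for t
  proof (cases "t \<ge> 0")
    case True then show ?thesis using CK_add[OF x0 K_scale[OF assms(1) True]] by simp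
  next
    case False
    then have "(-t) *\<^sub>R (-k) \<in> closure C" using K_scale[OF assms(2), of "-t"] by simp
    then show ?thesis using CK_add[OF x0] by simp
  qed
  then show False using nl nz unfolding contains_no_lines_def by blast
qed

lemma frontier_C: "p \<in> frontier C \<Longrightarrow> p \<in> closure C \<and> p \<notin> C"
  using C_open by (simp add: frontier_def interior_open)


definition SS where "SS p x = {c::real. c > 0 \<and> c *\<^sub>R x - p \<in> closure C}"

lemma Mfun_SS: "Mfun C p x = Inf (SS p x)"
  unfolding Mfun_def SS_def cone_le_def by simp

lemma big_in: assumes x: "x \<in> C" and r: "r > 0" "ball x r \<subseteq> C" and c: "c > norm p / r"
  shows "c *\<^sub>R x - p \<in> C"
proof -
  have cp: "c > 0" using c r by (smt (verit) divide_nonneg_pos norm_ge_zero)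
  have "norm p / c < r" using c r cp by (simp add: field_simps)
  moreover have "dist x (x - p /\<^sub>R c) = norm p / c" using cp by (simp add: dist_norm divide_inverse_commute)
  ultimately have "x - p /\<^sub>R c \<in> ball x r" by simp
  then have "x - p /\<^sub>R c \<in> C" using r by auto
  then have "c *\<^sub>R (x - p /\<^sub>R c) \<in> C" using C_scale cp by blast
  then show ?thesis using cp by (simp add: scaleR_diff_right)
qed

lemma ball_ex: "x \<in> C \<Longrightarrow> \<exists>r>0. ball x r \<subseteq> C"
  using C_open open_contains_ball by blast

lemma SS_ne: assumes "x \<in> C" shows "SS p x \<noteq> {}"
proof -
  obtain r where r: "r > 0" "ball x r \<subseteq> C" using ball_ex assms by blast
  have "norm p / r + 1 > norm p / r" by simp
  from big_in[OF assms r this] have "(norm p / r + 1) \<in> SS p x"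
    unfolding SS_def using closure_subset r by (auto intro!: add_nonneg_pos)
  then show ?thesis by auto
qed

lemma SS_bdd: "bdd_below (SS p x)"
  unfolding SS_def by (rule bdd_belowI[of _ 0]) auto

lemma m_nonneg: "x \<in> C \<Longrightarrow> Mfun C p x \<ge> 0"
  unfolding Mfun_SS by (rule cInf_greatest[OF SS_ne]) (auto simp: SS_def)

lemma m_le: "c > 0 \<Longrightarrow> c *\<^sub>R x - p \<in> closure C \<Longrightarrow> Mfun C p x \<le> c"
  unfolding Mfun_SS by (rule cInf_lower[OF _ SS_bdd]) (auto simp: SS_def)

lemma m_less: assumes x: "x \<in> C" and c: "c > Mfun C p x" shows "c *\<^sub>R x - p \<in> closure C"
proof -
  obtain s where s: "s \<in> SS p x" "s < c"
    using c unfolding Mfun_SS using cInf_less_iff[OF SS_ne[OF x] SS_bdd] by auto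
  then show ?thesis using K_diff[of s x p c] x closure_subset unfolding SS_def by auto
qed

lemma m_bound: assumes x: "x \<in> C" and r: "r > 0" "ball x r \<subseteq> C"
  shows "Mfun C h x \<le> norm h / r"
proof (rule dense_ge)
  fix c assume c: "norm h / r < c"
  have cp: "c > 0" using c r by (smt (verit) divide_nonneg_pos norm_ge_zero)
  show "Mfun C h x \<le> c" using m_le[OF cp] big_in[OF x r c] closure_subset by auto
qed

lemma m_subadd: assumes x: "x \<in> C" shows "Mfun C (p + h) x \<le> Mfun C p x + Mfun C h x"
proof (rule dense_ge)
  fix e assume e: "Mfun C p x + Mfun C h x < e"
  define d where "d = (e - Mfun C p x - Mfun C h x) / 2"
  have d: "d > 0" using e unfolding d_def by simp
  have 1: "(Mfun C p x + d) *\<^sub>R x - p \<in> closure C" using m_less[OF x] d by simp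
  have 2: "(Mfun C h x + d) *\<^sub>R x - h \<in> closure C" using m_less[OF x] d by simp
  have ee: "e = (Mfun C p x + d) + (Mfun C h x + d)" unfolding d_def by simp
  have eqv: "e *\<^sub>R x - (p + h) = ((Mfun C p x + d) *\<^sub>R x - p) + ((Mfun C h x + d) *\<^sub>R x - h)"
    by (subst ee) (simp add: algebra_simps flip: scaleR_2)
  have "e *\<^sub>R x - (p + h) \<in> closure C" unfolding eqv by (rule K_add[OF 1 2])
  moreover have "e > 0" using e m_nonneg[OF x, of p] m_nonneg[OF x, of h] by linarith
  ultimately show "Mfun C (p + h) x \<le> e" using m_le by blast
qed

lemma m_lip: assumes x: "x \<in> C" and r: "r > 0" "ball x r \<subseteq> C"
  shows "\<bar>Mfun C p x - Mfun C q x\<bar> \<le> norm (p - q) / r"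
proof -
  have "Mfun C p x \<le> Mfun C q x + Mfun C (p - q) x" using m_subadd[OF x, of q "p - q"] by simp
  moreover have "Mfun C q x \<le> Mfun C p x + Mfun C (q - p) x" using m_subadd[OF x, of p "q - p"] by simp
  moreover have "Mfun C (p - q) x \<le> norm (p - q) / r" by (rule m_bound[OF x r])
  moreover have "Mfun C (q - p) x \<le> norm (p - q) / r" using m_bound[OF x r, of "q - p"] by (simp add: norm_minus_commute)
  ultimately show ?thesis by linarith
qed

lemma m_cont: assumes x: "x \<in> C" and zs: "zs \<longlonglongrightarrow> z"
  shows "(\<lambda>n. Mfun C (zs n) x) \<longlonglongrightarrow> Mfun C z x"
proof -
  obtain r where r: "r > 0" "ball x r \<subseteq> C" using ball_ex x by blast
  have g: "(\<lambda>n. (zs n - z) /\<^sub>R r) \<longlonglongrightarrow> 0"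
    using tendsto_scaleR[OF tendsto_const Lim_null[THEN iffD1, OF zs], of "inverse r"] by simp
  have "(\<lambda>n. Mfun C (zs n) x - Mfun C z x) \<longlonglongrightarrow> 0"
  proof (rule Lim_transform_bound[OF _ g])
    show "\<forall>\<^sub>F n in sequentially. norm (Mfun C (zs n) x - Mfun C z x) \<le> norm ((zs n - z) /\<^sub>R r)"
      using m_lip[OF x r] r by (auto simp: divide_simps)
  qed
  then show ?thesis by (rule LIM_zero_cancel)
qed

lemma m_pos: assumes x: "x \<in> C" and p: "p \<in> closure C" "p \<noteq> 0" shows "Mfun C p x > 0"
proof (rule ccontr)
  assume "\<not> ?thesis"
  then have m0: "Mfun C p x = 0" using m_nonneg[OF x, of p] by linarith
  define f where "f n = inverse (real (Suc n)) *\<^sub>R x - p" for n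
  have "f n \<in> closure C" for n unfolding f_def using m_less[OF x, where c="inverse (real (Suc n))" and p=p] m0 by simp
  moreover have "f \<longlonglongrightarrow> 0 - p" unfolding f_def by (intro tendsto_diff tzero tendsto_const)
  ultimately have "- p \<in> closure C" using closed_sequentially[OF closed_closure] by (metis diff_0)
  then show False using pointed[OF p(1)] p(2) by blast
qed

lemma m_hom_le: assumes x: "x \<in> C" and t: "t > 0" shows "Mfun C (t *\<^sub>R p) x \<le> t * Mfun C p x"
proof (rule dense_ge)
  fix e assume e: "t * Mfun C p x < e"
  then have "e / t > Mfun C p x" using t by (simp add: field_simps)
  then have "(e / t) *\<^sub>R x - p \<in> closure C" by (rule m_less[OF x])
  then have "t *\<^sub>R ((e / t) *\<^sub>R x - p) \<in> closure C" using K_scale t by simp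
  then have "e *\<^sub>R x - t *\<^sub>R p \<in> closure C" using t by (simp add: scaleR_diff_right)
  moreover have "e > 0" using e m_nonneg[OF x, of p] t by (smt (verit) mult_nonneg_nonneg)
  ultimately show "Mfun C (t *\<^sub>R p) x \<le> e" using m_le by blast
qed

lemma m_hom: assumes x: "x \<in> C" and t: "t > 0" shows "Mfun C (t *\<^sub>R p) x = t * Mfun C p x"
proof -
  have "Mfun C p x = Mfun C (inverse t *\<^sub>R (t *\<^sub>R p)) x" using t by simp
  also have "\<dots> \<le> inverse t * Mfun C (t *\<^sub>R p) x" using m_hom_le[OF x, where t="inverse t" and p="t *\<^sub>R p"] t by simp
  finally have "t * Mfun C p x \<le> Mfun C (t *\<^sub>R p) x" using t by (simp add: field_simps)
  then show ?thesis using m_hom_le[OF x t, of p] by linarith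
qed


lemma conv: assumes b: "b \<in> C" and z: "z \<in> closure C" "z \<noteq> 0" and zs: "zs \<longlonglongrightarrow> z" and y: "y \<in> C"
  shows "(\<lambda>n. RFunk C y (zs n) - RFunk C b (zs n)) \<longlonglongrightarrow> rfun C b z y"
  unfolding RFunk_def Funk_def rfun_def
  by (intro tendsto_diff tendsto_ln m_cont[OF y zs] m_cont[OF b zs])
     (use m_pos[OF y z] m_pos[OF b z] in auto)

lemma scale_inv: assumes b: "b \<in> C" and y: "y \<in> C" and x: "x \<in> closure C" "x \<noteq> 0" and t: "t > 0"
  shows "RFunk C y (t *\<^sub>R x) - RFunk C b (t *\<^sub>R x) = RFunk C y x - RFunk C b x"
  unfolding RFunk_def Funk_def using m_pos[OF y x] m_pos[OF b x] t
  by (simp add: m_hom[OF y t] m_hom[OF b t] ln_mult)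

lemma rfun_scale: assumes b: "b \<in> C" and y: "y \<in> C" and x: "x \<in> closure C" "x \<noteq> 0" and t: "t > 0"
  shows "rfun C b (t *\<^sub>R x) y = rfun C b x y"
  using scale_inv[OF assms] unfolding rfun_def .

lemma half: assumes w: "w \<in> closure C" and le: "\<forall>y\<in>C. Mfun C z y \<le> Mfun C w y"
  shows "w - z \<in> closure C"
proof -
  obtain x0 where x0: "x0 \<in> C" using C_ne by auto
  define T where "T n = inverse (real (Suc n))" for n
  have Tp: "T n > 0" for n unfolding T_def by simp
  have T0: "T \<longlonglongrightarrow> 0" unfolding T_def by (rule LIMSEQ_inverse_real_of_nat)
  define f where "f n = (1 + T n) *\<^sub>R (w + T n *\<^sub>R x0) - z" for n
  have "f n \<in> closure C" for n
  proof -
    have yC: "w + T n *\<^sub>R x0 \<in> C" using CK_add[OF C_scale[OF x0 Tp] w] by (simp add: add.commute)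
    have "Mfun C w (w + T n *\<^sub>R x0) \<le> 1"
      by (rule m_le) (use C_scale[OF x0 Tp] closure_subset in auto)
    then have "Mfun C z (w + T n *\<^sub>R x0) < 1 + T n" using le yC Tp[of n] by force
    then show ?thesis unfolding f_def by (rule m_less[OF yC])
  qed
  moreover have "f \<longlonglongrightarrow> (1 + 0) *\<^sub>R (w + 0 *\<^sub>R x0) - z" unfolding f_def
    by (intro tendsto_intros T0)
  ultimately show ?thesis using closed_sequentially[OF closed_closure] by (metis add_0_right scaleR_one scaleR_zero_left)
qed

lemma inj_eq: assumes "z \<in> closure C" "w \<in> closure C" "\<forall>y\<in>C. Mfun C z y = Mfun C w y"
  shows "z = w"
proof -
  have "w - z \<in> closure C" using half[of w z] assms by auto
  moreover have "z - w \<in> closure C" using half[of z w] assms by auto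
  ultimately show ?thesis using pointed[of "z - w"] by auto
qed

lemma rfun_inj: assumes b: "b \<in> C" and z: "z \<in> closure C" "z \<noteq> 0" and p: "p \<in> closure C" "p \<noteq> 0"
  and eq: "\<forall>y\<in>C. rfun C b z y = rfun C b p y"
  shows "\<exists>c>0. z = c *\<^sub>R p"
proof -
  define c where "c = Mfun C z b / Mfun C p b"
  have c: "c > 0" unfolding c_def using m_pos[OF b z] m_pos[OF b p] by simp
  have "Mfun C z y = Mfun C (c *\<^sub>R p) y" if y: "y \<in> C" for y
  proof -
    have e1: "ln (Mfun C z y) - ln (Mfun C z b) = ln (Mfun C p y) - ln (Mfun C p b)"
      using eq y unfolding rfun_def RFunk_def Funk_def by auto
    have "ln c = ln (Mfun C z b) - ln (Mfun C p b)"
      using m_pos[OF b z] m_pos[OF b p] unfolding c_def by (simp add: ln_div)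
    then have "ln (Mfun C z y) = ln (Mfun C p y) + ln c" using e1 by linarith
    also have "\<dots> = ln (c * Mfun C p y)" using c m_pos[OF y p] by (simp add: ln_mult)
    finally have "Mfun C z y = c * Mfun C p y"
      using c m_pos[OF y p] m_pos[OF y z] by simp
    then show ?thesis using m_hom[OF y c] by simp
  qed
  then have "z = c *\<^sub>R p" using inj_eq[OF z(1) K_scale[OF p(1)]] c by auto
  then show ?thesis using c by blast
qed

lemma seq_p: assumes b: "b \<in> C" and p: "p \<in> closure C"
  shows "p + inverse (real (Suc n)) *\<^sub>R b \<in> C" "(\<lambda>n. p + inverse (real (Suc n)) *\<^sub>R b) \<longlonglongrightarrow> p"
proof -
  show "p + inverse (real (Suc n)) *\<^sub>R b \<in> C"
    using CK_add[OF C_scale[OF b] p, of "inverse (real (Suc n))"] by (simp add: add.commute)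
  show "(\<lambda>n. p + inverse (real (Suc n)) *\<^sub>R b) \<longlonglongrightarrow> p"
    using tendsto_add[OF tendsto_const tzero[of b], of p] by simp
qed

lemma not_int: assumes b: "b \<in> C" and p: "p \<in> frontier C" "p \<noteq> 0"
  shows "not_internal C b (rfun C b p)"
proof -
  have pK: "p \<in> closure C" and pC: "p \<notin> C" using frontier_C p by auto
  { fix q assume q: "q \<in> C" and eq: "\<forall>y\<in>C. rfun C b p y = RFunk C y q - RFunk C b q"
    have qK: "q \<in> closure C" "q \<noteq> 0" using q closure_subset zero_notin by auto
    define y where "y n = p + inverse (real (Suc n)) *\<^sub>R b" for n
    have yC: "y n \<in> C" for n unfolding y_def by (rule seq_p[OF b pK])
    have ylim: "y \<longlonglongrightarrow> p" unfolding y_def by (rule seq_p[OF b pK])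
    define A where "A = - ln (Mfun C p b) + ln (Mfun C q b)"
    define L where "L = exp A"
    have "Mfun C q (y n) < L + 1" for n
    proof -
      have "Mfun C p (y n) \<le> 1"
        by (rule m_le) (use C_scale[OF b, of "inverse (real (Suc n))"] closure_subset in \<open>auto simp: y_def\<close>)
      then have "ln (Mfun C p (y n)) \<le> 0" using m_pos[OF yC pK p(2)] by simp
      moreover have "ln (Mfun C q (y n)) = ln (Mfun C p (y n)) + A"
        using eq yC[of n] unfolding rfun_def RFunk_def Funk_def A_def by (auto simp: algebra_simps)
      ultimately have "ln (Mfun C q (y n)) \<le> A" by simp
      then have "Mfun C q (y n) \<le> L" unfolding L_def using m_pos[OF yC qK]
        by (metis exp_ln exp_le_cancel_iff)
      then show ?thesis by simp
    qed
    then have h1: "\<And>n. (L + 1) *\<^sub>R y n - q \<in> closure C" using m_less[OF yC] by blast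
    have h2: "(\<lambda>n. (L + 1) *\<^sub>R y n - q) \<longlonglongrightarrow> (L + 1) *\<^sub>R p - q"
      by (intro tendsto_intros ylim)
    have "(L + 1) *\<^sub>R p - q \<in> closure C"
      by (rule closed_sequentially[OF closed_closure h1 h2])
    then have "q + ((L + 1) *\<^sub>R p - q) \<in> C" by (rule CK_add[OF q])
    then have "(L + 1) *\<^sub>R p \<in> C" by simp
    moreover have "L + 1 > 0" unfolding L_def by (smt (verit) exp_gt_zero)
    ultimately have "inverse (L + 1) *\<^sub>R ((L + 1) *\<^sub>R p) \<in> C" using C_scale[of "(L + 1) *\<^sub>R p" "inverse (L + 1)"] by simp
    then have False using pC \<open>L + 1 > 0\<close> by simp
  }
  then show ?thesis unfolding not_internal_def by metis
qed

lemma sub_limit: fixes xs :: "nat \<Rightarrow> 'a" assumes xs: "\<forall>n. xs n \<in> C"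
  shows "\<exists>r z. strict_mono r \<and> z \<in> closure C \<and> norm z = 1 \<and> ((\<lambda>n. xs n /\<^sub>R norm (xs n)) \<circ> r) \<longlonglongrightarrow> z"
proof -
  have cpt: "compact (closure C \<inter> sphere 0 1)" by (rule closed_Int_compact[OF closed_closure compact_sphere])
  have nz: "xs n \<noteq> 0" for n using xs zero_notin by metis
  define w where "w n = xs n /\<^sub>R norm (xs n)" for n
  have "xs n /\<^sub>R norm (xs n) \<in> C" for n
    using C_scale[of "xs n" "inverse (norm (xs n))"] xs nz by simp
  moreover have "norm (xs n /\<^sub>R norm (xs n)) = 1" for n using nz by simp
  ultimately have inS: "\<forall>n. w n \<in> closure C \<inter> sphere 0 1"
    using closure_subset unfolding w_def by auto
  obtain z r where "z \<in> closure C \<inter> sphere 0 1" "strict_mono r"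
      "(w \<circ> r) \<longlonglongrightarrow> z"
    by (rule seq_compactE[OF compact_imp_seq_compact[OF cpt] inS])
  then show ?thesis unfolding w_def by auto
qed

end

theorem mainTheorem4:
  fixes C :: "'a::euclidean_space set" and b :: 'a
  assumes "open_cone C" and "contains_no_lines C" and "b \<in> C"
  shows "(\<forall>g. RF_horofunction C b g \<longleftrightarrow>
            (\<exists>p\<in>frontier C - {0}. \<forall>y\<in>C. g y = rfun C b p y))
       \<and> (\<forall>p\<in>frontier C - {0}. RF_Busemann C b (rfun C b p))
       \<and> (\<forall>D xs p. cross_section C D \<longrightarrow> (\<forall>n. xs n \<in> D) \<longrightarrow> p \<in> frontier C - {0} \<longrightarrow>
            (RF_converges C b xs (rfun C b p) \<longleftrightarrow> (\<exists>\<mu>>0. xs \<longlonglongrightarrow> \<mu> *\<^sub>R p)))"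
proof -
  interpret rc C using assms(1,2) by unfold_locales
  note b = assms(3)
  have P1: "\<forall>g. RF_horofunction C b g \<longleftrightarrow> (\<exists>p\<in>frontier C - {0}. \<forall>y\<in>C. g y = rfun C b p y)"
  proof (intro allI iffI)
    fix g assume h: "RF_horofunction C b g"
    then obtain xs where xs: "\<forall>n. xs n \<in> C" and cv: "RF_converges C b xs g" and ni: "not_internal C b g"
      unfolding RF_horofunction_def by blast
    obtain r z where r: "strict_mono r" and z: "z \<in> closure C" "norm z = 1"
      and lim: "((\<lambda>n. xs n /\<^sub>R norm (xs n)) \<circ> r) \<longlonglongrightarrow> z"
      using sub_limit[OF xs] by blast
    have z0: "z \<noteq> 0" using z by auto
    have gz: "g y = rfun C b z y" if y: "y \<in> C" for y
    proof -
      have 1: "(\<lambda>n. RFunk C y (xs n) - RFunk C b (xs n)) \<longlonglongrightarrow> g y"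
        using cv y unfolding RF_converges_def by blast
      have "(\<lambda>n. RFunk C y (xs (r n)) - RFunk C b (xs (r n))) \<longlonglongrightarrow> g y"
        using LIMSEQ_subseq_LIMSEQ[OF 1 r] by (simp add: o_def)
      moreover have "(\<lambda>n. RFunk C y (xs (r n)) - RFunk C b (xs (r n))) \<longlonglongrightarrow> rfun C b z y"
      proof -
        have "(\<lambda>n. RFunk C y (((\<lambda>n. xs n /\<^sub>R norm (xs n)) \<circ> r) n) - RFunk C b (((\<lambda>n. xs n /\<^sub>R norm (xs n)) \<circ> r) n)) \<longlonglongrightarrow> rfun C b z y"
          by (rule conv[OF b z(1) z0 lim y])
        moreover have "RFunk C y (((\<lambda>n. xs n /\<^sub>R norm (xs n)) \<circ> r) n) - RFunk C b (((\<lambda>n. xs n /\<^sub>R norm (xs n)) \<circ> r) n)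
             = RFunk C y (xs (r n)) - RFunk C b (xs (r n))" for n
        proof -
          have xK: "xs (r n) \<in> closure C" "xs (r n) \<noteq> 0" using xs closure_subset zero_notin by (metis subsetD, metis)
          then have "inverse (norm (xs (r n))) > 0" by simp
          from scale_inv[OF b y xK this] show ?thesis by simp
        qed
        ultimately show ?thesis by simp
      qed
      ultimately show ?thesis using LIMSEQ_unique by blast
    qed
    have "z \<notin> C"
    proof
      assume "z \<in> C"
      then show False using ni gz unfolding not_internal_def rfun_def by auto
    qed
    then have "z \<in> frontier C" using z C_open by (simp add: frontier_def interior_open)
    then show "\<exists>p\<in>frontier C - {0}. \<forall>y\<in>C. g y = rfun C b p y" using z0 gz by blast
  next
    fix g assume "\<exists>p\<in>frontier C - {0}. \<forall>y\<in>C. g y = rfun C b p y"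
    then obtain p where p: "p \<in> frontier C" "p \<noteq> 0" and gp: "\<forall>y\<in>C. g y = rfun C b p y" by blast
    have pK: "p \<in> closure C" using frontier_C p by auto
    define xs where "xs n = p + inverse (real (Suc n)) *\<^sub>R b" for n
    have "RF_converges C b xs g" unfolding RF_converges_def xs_def
      using conv[OF b pK p(2) seq_p(2)[OF b pK]] gp by auto
    moreover have "\<forall>n. xs n \<in> C" using seq_p(1)[OF b pK] xs_def by auto
    moreover have "not_internal C b g" using not_int[OF b p] gp unfolding not_internal_def by auto
    ultimately show "RF_horofunction C b g" unfolding RF_horofunction_def by blast
  qed
  have P2: "\<forall>p\<in>frontier C - {0}. RF_Busemann C b (rfun C b p)"
  proof
    fix p assume "p \<in> frontier C - {0}"
    then have p: "p \<in> frontier C" "p \<noteq> 0" by auto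
    have pK: "p \<in> closure C" using frontier_C p by auto
    define xs where "xs n = p + inverse (real (Suc n)) *\<^sub>R b" for n
    have xsC: "\<forall>n. xs n \<in> C" using seq_p(1)[OF b pK] xs_def by auto
    have xlim: "xs \<longlonglongrightarrow> p" unfolding xs_def by (rule seq_p(2)[OF b pK])
    have cv: "RF_converges C b xs (rfun C b p)" unfolding RF_converges_def
      using conv[OF b pK p(2) xlim] by auto
    have step: "RFunk C (xs (i - 1)) (xs i) \<le> 0" if i: "i \<ge> 1" for i
    proof -
      have "0 \<le> inverse (real (Suc (i - 1))) - inverse (real (Suc i))" by (simp add: field_simps)
      moreover have bK: "b \<in> closure C" using b closure_subset by auto
      ultimately have "(inverse (real (Suc (i - 1))) - inverse (real (Suc i))) *\<^sub>R b \<in> closure C"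
        using K_scale[OF bK] by blast
      then have "1 *\<^sub>R xs (i - 1) - xs i \<in> closure C" unfolding xs_def by (simp add: algebra_simps)
      then have "Mfun C (xs i) (xs (i - 1)) \<le> 1" by (rule m_le[rotated]) simp
      moreover have "Mfun C (xs i) (xs (i - 1)) > 0"
        using m_pos[of "xs (i - 1)" "xs i"] xsC closure_subset zero_notin by (metis subsetD)
      ultimately show ?thesis unfolding RFunk_def Funk_def by simp
    qed
    have "(\<lambda>l. RFunk C (xs 0) (xs l)) \<longlonglongrightarrow> ln (Mfun C p (xs 0))"
      unfolding RFunk_def Funk_def
      by (intro tendsto_ln m_cont xlim) (use m_pos[OF _ pK p(2), of "xs 0"] xsC in auto)
    then have "bounded (range (\<lambda>l. RFunk C (xs 0) (xs l)))" by (rule convergent_imp_bounded)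
    then obtain B where B: "\<forall>l. norm (RFunk C (xs 0) (xs l)) \<le> B" unfolding bounded_iff by auto
    have "B \<ge> 0" using B[rule_format, of 0] by (smt (verit) norm_ge_zero)
    have "RF_almost_geodesic C xs" unfolding RF_almost_geodesic_def
    proof (intro conjI xsC exI[of _ "B + 1"] allI impI)
      show "B + 1 > 0" using \<open>B \<ge> 0\<close> by simp
      fix l :: nat assume "l \<ge> 1"
      have "(\<Sum>i = 1..l. RFunk C (xs (i - 1)) (xs i)) \<le> 0"
        by (rule sum_nonpos) (use step in auto)
      moreover have "- RFunk C (xs 0) (xs l) \<le> B" using B[rule_format, of l] by simp
      ultimately show "(\<Sum>i = 1..l. RFunk C (xs (i - 1)) (xs i)) \<le> RFunk C (xs 0) (xs l) + (B + 1)"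
        by linarith
    qed
    then show "RF_Busemann C b (rfun C b p)"
      unfolding RF_Busemann_def using cv not_int[OF b p] by blast
  qed
  have P3: "\<forall>D xs p. cross_section C D \<longrightarrow> (\<forall>n. xs n \<in> D) \<longrightarrow> p \<in> frontier C - {0} \<longrightarrow>
            (RF_converges C b xs (rfun C b p) \<longleftrightarrow> (\<exists>\<mu>>0. xs \<longlonglongrightarrow> \<mu> *\<^sub>R p))"
  proof (intro allI impI)
    fix D and xs :: "nat \<Rightarrow> 'a" and p
    assume cs: "cross_section C D" and xsD: "\<forall>n. xs n \<in> D" and "p \<in> frontier C - {0}"
    then have p: "p \<in> frontier C" "p \<noteq> 0" by auto
    have pK: "p \<in> closure C" using frontier_C p by auto
    obtain \<psi> :: "'a \<Rightarrow> real" where lin: "linear \<psi>" and pos: "\<forall>x\<in>closure C - {0}. \<psi> x > 0"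
      and D: "D = {x\<in>C. \<psi> x = 1}"
      using cs unfolding cross_section_def by blast
    have xsC: "\<forall>n. xs n \<in> C" and psi1: "\<And>n. \<psi> (xs n) = 1" using xsD D by auto
    have bl: "bounded_linear \<psi>" using lin linear_conv_bounded_linear by blast
    have psc: "\<psi> (c *\<^sub>R x) = c * \<psi> x" for c x using linear_scale[OF lin] by simp
    show "RF_converges C b xs (rfun C b p) \<longleftrightarrow> (\<exists>\<mu>>0. xs \<longlonglongrightarrow> \<mu> *\<^sub>R p)"
    proof
      assume "\<exists>\<mu>>0. xs \<longlonglongrightarrow> \<mu> *\<^sub>R p"
      then obtain \<mu> where mu: "\<mu> > 0" "xs \<longlonglongrightarrow> \<mu> *\<^sub>R p" by blast
      have mK: "\<mu> *\<^sub>R p \<in> closure C" "\<mu> *\<^sub>R p \<noteq> 0" using K_scale[OF pK] mu p by auto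
      show "RF_converges C b xs (rfun C b p)" unfolding RF_converges_def
        using conv[OF b mK mu(2)] rfun_scale[OF b _ pK p(2) mu(1)] by auto
    next
      assume cv: "RF_converges C b xs (rfun C b p)"
      define q where "q = inverse (\<psi> p) *\<^sub>R p"
      have psip: "\<psi> p > 0" using pos pK p by auto
      have "xs \<longlonglongrightarrow> q"
      proof (rule ccontr)
        assume nc: "\<not> xs \<longlonglongrightarrow> q"
        then obtain e where e: "e > 0" and fr: "\<forall>N. \<exists>n\<ge>N. \<not> norm (xs n - q) < e"
          unfolding LIMSEQ_iff by auto
        then have "infinite {n. \<not> norm (xs n - q) < e}"
          unfolding infinite_nat_iff_unbounded_le by auto
        then obtain r :: "nat \<Rightarrow> nat" where r: "strict_mono r" and rb: "\<And>n. \<not> norm (xs (r n) - q) < e"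
          using infinite_enumerate by blast
        have xrC: "\<forall>n. (xs \<circ> r) n \<in> C" using xsC by simp
        obtain s z where s: "strict_mono s" and z: "z \<in> closure C" "norm z = 1"
          and lim: "((\<lambda>n. (xs \<circ> r) n /\<^sub>R norm ((xs \<circ> r) n)) \<circ> s) \<longlonglongrightarrow> z"
          using sub_limit[OF xrC] by blast
        define w where "w = ((\<lambda>n. (xs \<circ> r) n /\<^sub>R norm ((xs \<circ> r) n)) \<circ> s)"
        have z0: "z \<noteq> 0" using z by auto
        have psiz: "\<psi> z > 0" using pos z z0 by auto
        have wl: "w \<longlonglongrightarrow> z" using lim unfolding w_def .
        have pw: "(\<lambda>n. \<psi> (w n)) \<longlonglongrightarrow> \<psi> z" by (rule bounded_linear.tendsto[OF bl wl])
        have xw: "xs (r (s n)) = inverse (\<psi> (w n)) *\<^sub>R w n" for n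
        proof -
          have nz: "xs (r (s n)) \<noteq> 0" using xsC zero_notin by metis
          have "\<psi> (w n) = inverse (norm (xs (r (s n))))" unfolding w_def using psc psi1 by simp
          then show ?thesis unfolding w_def using nz by simp
        qed
        define z' where "z' = inverse (\<psi> z) *\<^sub>R z"
        have xl: "(\<lambda>n. xs (r (s n))) \<longlonglongrightarrow> z'" unfolding xw z'_def
          by (intro tendsto_intros pw wl) (use psiz in simp)
        have z'K: "z' \<in> closure C" "z' \<noteq> 0" unfolding z'_def using K_scale[OF z(1)] psiz z0 by auto
        have rs: "strict_mono (r \<circ> s)" using r s by (rule strict_mono_o)
        have "rfun C b z' y = rfun C b p y" if y: "y \<in> C" for y
        proof -
          have 1: "(\<lambda>n. RFunk C y (xs n) - RFunk C b (xs n)) \<longlonglongrightarrow> rfun C b p y"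
            using cv y unfolding RF_converges_def by blast
          have "(\<lambda>n. RFunk C y (xs (r (s n))) - RFunk C b (xs (r (s n)))) \<longlonglongrightarrow> rfun C b p y"
            using LIMSEQ_subseq_LIMSEQ[OF 1 rs] by (simp add: o_def)
          moreover have "(\<lambda>n. RFunk C y (xs (r (s n))) - RFunk C b (xs (r (s n)))) \<longlonglongrightarrow> rfun C b z' y"
            by (rule conv[OF b z'K xl y])
          ultimately show ?thesis using LIMSEQ_unique by blast
        qed
        then obtain c where c: "c > 0" "z' = c *\<^sub>R p" using rfun_inj[OF b z'K pK p(2)] by blast
        have "\<psi> z' = 1" unfolding z'_def using psc psiz by simp
        then have "c * \<psi> p = 1" using c psc by simp
        then have "c = inverse (\<psi> p)" using psip by (simp add: field_simps)
        then have "z' = q" using c q_def by simp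
        then have "(\<lambda>n. xs (r (s n))) \<longlonglongrightarrow> q" using xl by simp
        then obtain N where "\<forall>n\<ge>N. norm (xs (r (s n)) - q) < e" using e unfolding LIMSEQ_iff by blast
        then show False using rb[of "s N"] by auto
      qed
      moreover have "inverse (\<psi> p) > 0" using psip by simp
      ultimately show "\<exists>\<mu>>0. xs \<longlonglongrightarrow> \<mu> *\<^sub>R p" unfolding q_def by blast
    qed
  qed
  show ?thesis using P1 P2 P3 by blast
qed

end
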